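(* Let $n\ge 1$ and let $\mu$ be a locally valid MV assignment of $M_{2,n}$. Let $w_1,w_2,w_3$ be its three locally valid extensions to $M_{2,n+1}$, ordered so that $f(w_1)\ge f(w_2)\ge f(w_3)$, where $f$ denotes the number of flippable faces. If $n=1$, or if $n\ge2$ and $(\mu(e_{3n-4}),\mu(e_{3n-3}),\mu(e_{3n-2}))$ equals $(M,V,M)$ or $(V,M,V)$, then $$(f(w_1)-f(\mu),\,f(w_2)-f(\mu),\,f(w_3)-f(\mu))=(2,0,0).$$ Otherwise $$(f(w_1)-f(\mu),\,f(w_2)-f(\mu),\,f(w_3)-f(\mu))=(2,1,0).$$
   Context: The $2\times n$ Miura-ori $M_{2,n}$ ($n\ge1$) has faces $\alpha_{i,j}$ ($i\in\{1,2\}$, $j\in\{1,\dots,n\}$), interior vertices $x_1,\dots,x_{n-1}$, and creases $e_0$ and $e_{3k-1},e_{3k},e_{3k+1}$ ($k=1,\dots,n-1$). At $x_k$ the creases are left $e_{3k-3}$, top $e_{3k-1}$, right $e_{3k}$, bottom $e_{3k+1}$ (angles adjacent to the left crease obtuse, others acute). Face $\alpha_{1,j}$ is bordered by those of $e_{3j-4}$ (iff $j\ge2$), $e_{3j-3}$, $e_{3j-1}$ (iff $j\le n-1$); $\alpha_{2,j}$ by those of $e_{3j-2}$ (iff $j\ge2$), $e_{3j-3}$, $e_{3j+1}$ (iff $j\le n-1$). An MV assignment $\mu$ maps creases to $\{M,V\}=\{1,-1\}$; it is locally valid if for each $k$ exactly one of $\mu(e_{3k-1}),\mu(e_{3k}),\mu(e_{3k+1})$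 differs from $\mu(e_{3k-3})$. The face flip $\mu_\alpha$ negates $\mu$ on the creases bordering $\alpha$; $\alpha$ is flippable under $\mu$ if $\mu,\mu_\alpha$ are both locally valid. The creases of $M_{2,n+1}$ are those of $M_{2,n}$ plus $e_{3n-1},e_{3n},e_{3n+1}$ around the new vertex $x_n$ (and the faces of column $n$ get new creases); an extension of $\mu$ is a locally valid MV assignment of $M_{2,n+1}$ agreeing with $\mu$ on the creases of $M_{2,n}$. Each locally valid $\mu$ has exactly three extensions. *)

theory Defs
  imports Main
begin

text \<open>Creases of the 2 x n Miura-ori are indexed by natural numbers: crease e_m is m.
  MV values: M = 1, V = -1 (as integers).\<close>

definition creases :: "nat \<Rightarrow> nat set" where
  "creases n = {0} \<union> (\<Union>k\<in>{1..n-1}. {3*k-1, 3*k, 3*k+1})"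

definition faces :: "nat \<Rightarrow> (nat \<times> nat) set" where
  "faces n = {1,2} \<times> {1..n}"

definition border :: "nat \<Rightarrow> nat \<times> nat \<Rightarrow> nat set" where
  "border n a = (let i = fst a; j = snd a in
     if i = 1 then {e. (e = 3*j-4 \<and> j \<ge> 2) \<or> e = 3*j-3 \<or> (e = 3*j-1 \<and> j \<le> n-1)}
     else {e. (e = 3*j-2 \<and> j \<ge> 2) \<or> e = 3*j-3 \<or> (e = 3*j+1 \<and> j \<le> n-1)})"

text \<open>An MV assignment of M_{2,n}: values in {M,V} = {1,-1} on creases; by convention
  (to make assignments extensional) value 0 off the creases.\<close>

definition mv_assign :: "nat \<Rightarrow> (nat \<Rightarrow> int) \<Rightarrow> bool" where
  "mv_assign n mu \<longleftrightarrow> (\<forall>e\<in>creases n. mu e = 1 \<or> mu e = -1) \<and> (\<forall>e. e \<notin> creases n \<longrightarrow> mu e = 0)"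

definition locally_valid :: "nat \<Rightarrow> (nat \<Rightarrow> int) \<Rightarrow> bool" where
  "locally_valid n mu \<longleftrightarrow> mv_assign n mu \<and>
     (\<forall>k\<in>{1..n-1}. card {e\<in>{3*k-1, 3*k, 3*k+1}. mu e \<noteq> mu (3*k-3)} = 1)"

definition face_flip :: "nat \<Rightarrow> (nat \<Rightarrow> int) \<Rightarrow> nat \<times> nat \<Rightarrow> (nat \<Rightarrow> int)" where
  "face_flip n mu a = (\<lambda>e. if e \<in> border n a then - mu e else mu e)"

definition flippable :: "nat \<Rightarrow> (nat \<Rightarrow> int) \<Rightarrow> nat \<times> nat \<Rightarrow> bool" where
  "flippable n mu a \<longleftrightarrow> locally_valid n mu \<and> locally_valid n (face_flip n mu a)"

definition nflip :: "nat \<Rightarrow> (nat \<Rightarrow> int) \<Rightarrow> nat" where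
  "nflip n mu = card {a\<in>faces n. flippable n mu a}"

definition extensions :: "nat \<Rightarrow> (nat \<Rightarrow> int) \<Rightarrow> (nat \<Rightarrow> int) set" where
  "extensions n mu = {w. locally_valid (n+1) w \<and> (\<forall>e\<in>creases n. w e = mu e)}"

end

theory Submission
  imports Defs
begin

definition ex1 :: "bool \<Rightarrow> bool \<Rightarrow> bool \<Rightarrow> bool" where
  "ex1 p q r \<longleftrightarrow> (p \<and> \<not>q \<and> \<not>r) \<or> (\<not>p \<and> q \<and> \<not>r) \<or> (\<not>p \<and> \<not>q \<and> r)"

definition vx :: "(nat \<Rightarrow> int) \<Rightarrow> nat \<Rightarrow> bool" where
  "vx mu k \<longleftrightarrow> card {e\<in>{3*k-1, 3*k, 3*k+1}. mu e \<noteq> mu (3*k-3)} = 1"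

lemma card3:
  assumes "a \<noteq> b" "a \<noteq> c" "b \<noteq> c"
  shows "card {e\<in>{a,b,c}. P e} = 1 \<longleftrightarrow> ex1 (P a) (P b) (P c)"
proof -
  have eq: "{e\<in>{a,b,c}. P e} = (if P a then {a} else {}) \<union> (if P b then {b} else {}) \<union> (if P c then {c} else {})"
    by auto
  show ?thesis unfolding eq using assms by (cases "P a"; cases "P b"; cases "P c") (simp_all add: ex1_def)
qed

lemma vx_at:
  assumes "k \<ge> 1" "l = 3*k-3" "a = 3*k-1" "b = 3*k" "c = 3*k+1"
  shows "vx f k \<longleftrightarrow> ex1 (f a \<noteq> f l) (f b \<noteq> f l) (f c \<noteq> f l)"
  unfolding vx_def using assms by (subst card3) auto

lemma lv_iff: "locally_valid N mu \<longleftrightarrow> mv_assign N mu \<and> (\<forall>k\<in>{1..N-1}. vx mu k)"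
  unfolding locally_valid_def vx_def by simp

lemma mv_flip: "mv_assign N mu \<Longrightarrow> mv_assign N (face_flip N mu a)"
  unfolding mv_assign_def face_flip_def by auto

lemma vx_cong:
  assumes "k \<ge> 1" "\<And>e. e \<in> {3*k-3, 3*k-1, 3*k, 3*k+1} \<Longrightarrow> f e = g e"
  shows "vx f k = vx g k"
  using assms by (simp add: vx_at[OF assms(1) refl refl refl refl])

lemma border_far:
  assumes "k \<ge> 1" "j \<ge> 1" "k \<noteq> j - 1" "k \<noteq> j" "e \<in> {3*k-3, 3*k-1, 3*k, 3*k+1}"
  shows "e \<notin> border N (i, j)"
  using assms unfolding border_def Let_def
  apply (cases "i = 1")
   apply (simp_all)
  apply (elim disjE; simp; arith)+
  done

lemma flip_local:
  assumes "locally_valid N mu" "j \<ge> 1" "j \<le> N"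
  shows "flippable N mu (i,j) \<longleftrightarrow>
     (2 \<le> j \<longrightarrow> vx (face_flip N mu (i,j)) (j-1)) \<and> (j+1 \<le> N \<longrightarrow> vx (face_flip N mu (i,j)) j)"
proof -
  have far: "vx (face_flip N mu (i,j)) k = vx mu k" if "k \<ge> 1" "k \<noteq> j-1" "k \<noteq> j" for k
    by (rule vx_cong[OF that(1)]) (use border_far[OF that(1) assms(2) that(2,3)] in \<open>auto simp: face_flip_def\<close>)
  have mv: "mv_assign N mu" and all: "\<forall>k\<in>{1..N-1}. vx mu k" using assms(1) lv_iff by auto
  have "(\<forall>k\<in>{1..N-1}. vx (face_flip N mu (i,j)) k) \<longleftrightarrow>
     (2 \<le> j \<longrightarrow> vx (face_flip N mu (i,j)) (j-1)) \<and> (j+1 \<le> N \<longrightarrow> vx (face_flip N mu (i,j)) j)"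
  proof
    assume H: "\<forall>k\<in>{1..N-1}. vx (face_flip N mu (i,j)) k"
    show "(2 \<le> j \<longrightarrow> vx (face_flip N mu (i,j)) (j-1)) \<and> (j+1 \<le> N \<longrightarrow> vx (face_flip N mu (i,j)) j)"
    proof (intro conjI impI)
      assume "2 \<le> j" then have "j - 1 \<in> {1..N-1}" using assms(3) by auto
      then show "vx (face_flip N mu (i,j)) (j-1)" using H by blast
    next
      assume "j + 1 \<le> N" then have "j \<in> {1..N-1}" using assms(2) by auto
      then show "vx (face_flip N mu (i,j)) j" using H by blast
    qed
  next
    assume H: "(2 \<le> j \<longrightarrow> vx (face_flip N mu (i,j)) (j-1)) \<and> (j+1 \<le> N \<longrightarrow> vx (face_flip N mu (i,j)) j)"
    show "\<forall>k\<in>{1..N-1}. vx (face_flip N mu (i,j)) k"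
    proof
      fix k assume k: "k \<in> {1..N-1}"
      show "vx (face_flip N mu (i,j)) k"
      proof (cases "k = j - 1 \<or> k = j")
        case True then show ?thesis using H k by auto
      next
        case False then show ?thesis using far[of k] all k by auto
      qed
    qed
  qed
  then show ?thesis
    unfolding flippable_def lv_iff using mv_flip[OF mv] mv all by blast
qed

lemma creases_Suc:
  assumes "n \<ge> 1"
  shows "creases (n+1) = creases n \<union> {3*n-1, 3*n, 3*n+1}"
proof -
  have "{1..n} = {1..n-1} \<union> {n}" using assms by auto
  then show ?thesis unfolding creases_def by auto
qed

lemma vertex_in_creases:
  assumes "k \<in> {1..n-1}"
  shows "{3*k-3, 3*k-1, 3*k, 3*k+1} \<subseteq> creases n"
proof -
  have a: "{3*k-1, 3*k, 3*k+1} \<subseteq> creases n" using assms unfolding creases_def by blast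
  have "3*k-3 \<in> creases n"
  proof (cases "k = 1")
    case True then show ?thesis unfolding creases_def by simp
  next
    case False
    then have "k - 1 \<in> {1..n-1}" "3*k-3 = 3*(k-1)" using assms by auto
    then show ?thesis unfolding creases_def by blast
  qed
  then show ?thesis using a by auto
qed

lemma border_eq:
  assumes "j \<le> n - 1"
  shows "border (n+1) (i,j) = border n (i,j)"
  using assms unfolding border_def Let_def by auto

lemma ext_props:
  assumes "w \<in> extensions n mu"
  shows "locally_valid (n+1) w" "\<And>e. e \<in> creases n \<Longrightarrow> w e = mu e"
  using assms unfolding extensions_def by auto

lemma flip_old:
  assumes "locally_valid n mu" "w \<in> extensions n mu" "j \<in> {1..n-1}"
  shows "flippable (n+1) w (i,j) \<longleftrightarrow> flippable n mu (i,j)"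
proof -
  have lw: "locally_valid (n+1) w" and agree: "\<And>e. e \<in> creases n \<Longrightarrow> w e = mu e"
    using ext_props[OF assms(2)] by auto
  have j: "j \<ge> 1" "j \<le> n" "j \<le> n+1" "j \<le> n - 1" using assms(3) by auto
  have fe: "face_flip (n+1) w (i,j) e = face_flip n mu (i,j) e" if "e \<in> creases n" for e
    using agree[OF that] border_eq[OF j(4), of i] unfolding face_flip_def by simp
  have v1: "vx (face_flip (n+1) w (i,j)) (j-1) = vx (face_flip n mu (i,j)) (j-1)" if "2 \<le> j"
  proof -
    have jj: "j - 1 \<in> {1..n-1}" using that j by auto
    have sub: "{3*(j-1)-3, 3*(j-1)-1, 3*(j-1), 3*(j-1)+1} \<subseteq> creases n"
      using vertex_in_creases[OF jj] .
    show ?thesis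
    proof (rule vx_cong)
      show "1 \<le> j - 1" using that by simp
    next
      fix e assume "e \<in> {3*(j-1)-3, 3*(j-1)-1, 3*(j-1), 3*(j-1)+1}"
      then show "face_flip (n+1) w (i,j) e = face_flip n mu (i,j) e" using sub fe by blast
    qed
  qed
  have v2: "vx (face_flip (n+1) w (i,j)) j = vx (face_flip n mu (i,j)) j"
  proof (rule vx_cong)
    show "1 \<le> j" using j by simp
  next
    fix e assume "e \<in> {3*j-3, 3*j-1, 3*j, 3*j+1}"
    then show "face_flip (n+1) w (i,j) e = face_flip n mu (i,j) e"
      using vertex_in_creases[OF assms(3)] fe by blast
  qed
  show ?thesis
    unfolding flip_local[OF lw j(1,3)] flip_local[OF assms(1) j(1,2)] using v1 v2 j by auto
qed

lemma card_filter_sum: "finite A \<Longrightarrow> card {a\<in>A. P a} = (\<Sum>a\<in>A. if P a then 1 else 0)"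
  by (simp add: sum.inter_filter[symmetric])

lemma card_filter_Un:
  assumes "finite A" "finite B" "A \<inter> B = {}"
  shows "card {a\<in>A \<union> B. P a} = card {a\<in>A. P a} + card {a\<in>B. P a}"
proof -
  have "{a\<in>A \<union> B. P a} = {a\<in>A. P a} \<union> {a\<in>B. P a}" by auto
  then show ?thesis using assms by (simp add: card_Un_disjoint disjoint_iff)
qed

definition fl :: "nat \<Rightarrow> (nat \<Rightarrow> int) \<Rightarrow> nat \<times> nat \<Rightarrow> int" where
  "fl N f a = (if flippable N f a then 1 else 0)"

lemma delta:
  assumes "n \<ge> 1" "locally_valid n mu" "w \<in> extensions n mu"
  shows "int (nflip (n+1) w) - int (nflip n mu) =
     fl (n+1) w (1,n) + fl (n+1) w (2,n) + fl (n+1) w (1,n+1) + fl (n+1) w (2,n+1)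
     - fl n mu (1,n) - fl n mu (2,n)"
proof -
  let ?P = "{1::nat,2} \<times> {1..n-1}"
  have f1: "faces (n+1) = ?P \<union> {(1,n),(2,n),(1,n+1),(2,n+1)}"
    using assms(1) unfolding faces_def by auto
  have f0: "faces n = ?P \<union> {(1,n),(2,n)}"
    using assms(1) unfolding faces_def by auto
  have same: "{a\<in>?P. flippable (n+1) w a} = {a\<in>?P. flippable n mu a}"
    using flip_old[OF assms(2,3)] by auto
  have c1: "nflip (n+1) w = card {a\<in>?P. flippable n mu a} + card {a\<in>{(1,n),(2,n),(1,n+1),(2,n+1)}. flippable (n+1) w a}"
    unfolding nflip_def f1 by (subst card_filter_Un) (auto simp only: same, auto)
  have c0: "nflip n mu = card {a\<in>?P. flippable n mu a} + card {a\<in>{(1,n),(2,n)}. flippable n mu a}"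
    unfolding nflip_def f0 by (subst card_filter_Un) auto
  have e1: "card {a\<in>{(1,n),(2,n),(1,n+1),(2,n+1)}. flippable (n+1) w a} =
     (\<Sum>a\<in>{(1,n),(2,n),(1,n+1),(2,n+1)}. if flippable (n+1) w a then 1 else 0)"
    by (rule card_filter_sum) simp
  have e0: "card {a\<in>{(1,n),(2,n)}. flippable n mu a} =
     (\<Sum>a\<in>{(1,n),(2,n)}. if flippable n mu a then 1 else 0)"
    by (rule card_filter_sum) simp
  show ?thesis unfolding c1 c0 e1 e0 by (simp add: fl_def)
qed

lemma vx_m1: "vx f (m+1) \<longleftrightarrow> ex1 (f (3*m+2) \<noteq> f (3*m)) (f (3*m+3) \<noteq> f (3*m)) (f (3*m+4) \<noteq> f (3*m))"
  by (rule vx_at) auto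
lemma vx_m2: "vx f (m+2) \<longleftrightarrow> ex1 (f (3*m+5) \<noteq> f (3*m+3)) (f (3*m+6) \<noteq> f (3*m+3)) (f (3*m+7) \<noteq> f (3*m+3))"
  by (rule vx_at) auto
lemma vx_1: "vx f 1 \<longleftrightarrow> ex1 (f 2 \<noteq> f 0) (f 3 \<noteq> f 0) (f 4 \<noteq> f 0)"
  by (rule vx_at) auto

lemma borders_m:
  "border (m+3) (1, m+2) = {3*m+2, 3*m+3, 3*m+5}"
  "border (m+3) (2, m+2) = {3*m+4, 3*m+3, 3*m+7}"
  "border (m+3) (1, m+3) = {3*m+5, 3*m+6}"
  "border (m+3) (2, m+3) = {3*m+7, 3*m+6}"
  "border (m+2) (1, m+2) = {3*m+2, 3*m+3}"
  "border (m+2) (2, m+2) = {3*m+4, 3*m+3}"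
  unfolding border_def Let_def by auto

lemma borders_1:
  "border 2 (1, 1) = {0, 2}"
  "border 2 (2, 1) = {0, 4}"
  "border 2 (1, 2) = {2, 3}"
  "border 2 (2, 2) = {4, 3}"
  "border 1 (1, 1) = {0}"
  "border 1 (2, 1) = {0}"
  unfolding border_def Let_def by auto

lemma pm_val: "mv_assign N f \<Longrightarrow> e \<in> creases N \<Longrightarrow> f e = 1 \<or> f e = -1"
  unfolding mv_assign_def by auto

lemma core:
  fixes a b s d x y z :: int
  assumes "a = 1 \<or> a = -1" "b = 1 \<or> b = -1" "s = 1 \<or> s = -1" "d = 1 \<or> d = -1"
    "x = 1 \<or> x = -1" "y = 1 \<or> y = -1" "z = 1 \<or> z = -1"
    "ex1 (b \<noteq> a) (s \<noteq> a) (d \<noteq> a)" "ex1 (x \<noteq> s) (y \<noteq> s) (z \<noteq> s)"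
  shows "(if ex1 (-b \<noteq> a) (-s \<noteq> a) (d \<noteq> a) \<and> ex1 (-x \<noteq> -s) (y \<noteq> -s) (z \<noteq> -s) then (1::int) else 0)
       + (if ex1 (b \<noteq> a) (-s \<noteq> a) (-d \<noteq> a) \<and> ex1 (x \<noteq> -s) (y \<noteq> -s) (-z \<noteq> -s) then (1::int) else 0)
       + (if ex1 (-x \<noteq> s) (-y \<noteq> s) (z \<noteq> s) then (1::int) else 0)
       + (if ex1 (x \<noteq> s) (-y \<noteq> s) (-z \<noteq> s) then (1::int) else 0)
       - (if ex1 (-b \<noteq> a) (-s \<noteq> a) (d \<noteq> a) then (1::int) else 0)
       - (if ex1 (b \<noteq> a) (-s \<noteq> a) (-d \<noteq> a) then (1::int) else 0)
     = (if x \<noteq> s then (if b = s \<and> d \<noteq> s then (1::int) else 0)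
        else if y \<noteq> s then 2
        else (if d = s \<and> b \<noteq> s then (1::int) else 0))"
  proof -
  have e: "\<And>u v::int. (u = 1 \<or> u = -1) \<Longrightarrow> (v = 1 \<or> v = -1) \<Longrightarrow> (-u \<noteq> v) = (u = v)" by auto
  have e2: "\<And>u v::int. (u = 1 \<or> u = -1) \<Longrightarrow> (v = 1 \<or> v = -1) \<Longrightarrow> (u \<noteq> -v) = (u = v)" by auto
  have t: "\<And>u v r::int. (u = 1 \<or> u = -1) \<Longrightarrow> (v = 1 \<or> v = -1) \<Longrightarrow> (r = 1 \<or> r = -1) \<Longrightarrow> (u = v) = ((u = r) = (v = r))" by auto
  note E = e[OF assms(2) assms(1)] e[OF assms(3) assms(1)] e[OF assms(4) assms(1)]
    e[OF assms(5) assms(3)] e[OF assms(6) assms(3)] e[OF assms(7) assms(3)]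
    e2[OF assms(5) assms(3)] e2[OF assms(6) assms(3)] e2[OF assms(7) assms(3)]
    t[OF assms(2) assms(3) assms(1)] t[OF assms(4) assms(3) assms(1)]
  show ?thesis using assms(8,9) unfolding E neg_equal_iff_equal
    apply (cases "b = a"; cases "s = a"; cases "d = a"; cases "x = s"; cases "y = s"; cases "z = s") 
    apply (simp_all add: ex1_def)
    done
qed

lemma delta_m:
  assumes lv: "locally_valid (m+2) mu" and ext: "w \<in> extensions (m+2) mu"
  shows "int (nflip (m+3) w) - int (nflip (m+2) mu) =
    (if w (3*m+5) \<noteq> w (3*m+3) then (if w (3*m+2) = w (3*m+3) \<and> w (3*m+4) \<noteq> w (3*m+3) then 1 else 0)
     else if w (3*m+6) \<noteq> w (3*m+3) then 2
     else (if w (3*m+4) = w (3*m+3) \<and> w (3*m+2) \<noteq> w (3*m+3) then 1 else 0))" (is "_ = ?R")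
proof -
  have lw: "locally_valid (m+3) w" using ext_props(1)[OF ext] by (simp add: numeral_eq_Suc)
  have agree: "\<And>e. e \<in> creases (m+2) \<Longrightarrow> w e = mu e"
    using ext_props[OF ext] by auto
  have D: "int (nflip (m+3) w) - int (nflip (m+2) mu) =
     fl (m+3) w (1,m+2) + fl (m+3) w (2,m+2) + fl (m+3) w (1,m+3) + fl (m+3) w (2,m+3)
     - fl (m+2) mu (1,m+2) - fl (m+2) mu (2,m+2)"
    using delta[of "m+2" mu w] lv ext by (simp add: numeral_eq_Suc)
  have c1: "{3*m, 3*m+2, 3*m+3, 3*m+4} \<subseteq> creases (m+2)"
    using vertex_in_creases[of "m+1" "m+2"] by (simp add: numeral_eq_Suc)
  have c2: "{3*m+3, 3*m+5, 3*m+6, 3*m+7} \<subseteq> creases (m+3)"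
    using vertex_in_creases[of "m+2" "m+3"] by (simp add: numeral_eq_Suc)
  have "creases (m+2+1) = creases (m+2) \<union> {3*(m+2)-1, 3*(m+2), 3*(m+2)+1}" by (rule creases_Suc) simp
  then have "creases (m+2) \<subseteq> creases (m+2+1)" by blast
  then have cr: "creases (m+2) \<subseteq> creases (m+3)" by (simp add: numeral_eq_Suc)
  have mw: "mu (3*m) = w (3*m)" "mu (3*m+2) = w (3*m+2)" "mu (3*m+3) = w (3*m+3)" "mu (3*m+4) = w (3*m+4)"
    using agree c1 by auto
  have mvw: "mv_assign (m+3) w" using lw lv_iff by auto
  have vals: "w e = 1 \<or> w e = -1" if "e \<in> {3*m, 3*m+2, 3*m+3, 3*m+4, 3*m+5, 3*m+6, 3*m+7}" for e
    using pm_val[OF mvw, of e] that c1 c2 cr by auto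
  have v1: "vx mu (m+1)" using lv lv_iff by (auto simp: numeral_eq_Suc)
  have v2: "vx w (m+2)" using lw lv_iff by (auto simp: numeral_eq_Suc)
  have flw: "\<And>i. fl (m+3) w (i,m+2) = (if vx (face_flip (m+3) w (i,m+2)) (m+1) \<and> vx (face_flip (m+3) w (i,m+2)) (m+2) then 1 else 0)"
    "\<And>i. fl (m+3) w (i,m+3) = (if vx (face_flip (m+3) w (i,m+3)) (m+2) then 1 else 0)"
    "\<And>i. fl (m+2) mu (i,m+2) = (if vx (face_flip (m+2) mu (i,m+2)) (m+1) then 1 else 0)"
    unfolding fl_def
    using flip_local[OF lw, of "m+2"] flip_local[OF lw, of "m+3"] flip_local[OF lv, of "m+2"] by simp_all
  have v1': "ex1 (w (3*m+2) \<noteq> w (3*m)) (w (3*m+3) \<noteq> w (3*m)) (w (3*m+4) \<noteq> w (3*m))"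
    using v1 unfolding vx_m1 mw .
  have v2': "ex1 (w (3*m+5) \<noteq> w (3*m+3)) (w (3*m+6) \<noteq> w (3*m+3)) (w (3*m+7) \<noteq> w (3*m+3))"
    using v2 unfolding vx_m2 .
  have A: "fl (m+3) w (1,m+2) = (if ex1 (-w (3*m+2) \<noteq> w (3*m)) (-w (3*m+3) \<noteq> w (3*m)) (w (3*m+4) \<noteq> w (3*m)) \<and> ex1 (-w (3*m+5) \<noteq> -w (3*m+3)) (w (3*m+6) \<noteq> -w (3*m+3)) (w (3*m+7) \<noteq> -w (3*m+3)) then 1 else 0)"
    "fl (m+3) w (2,m+2) = (if ex1 (w (3*m+2) \<noteq> w (3*m)) (-w (3*m+3) \<noteq> w (3*m)) (-w (3*m+4) \<noteq> w (3*m)) \<and> ex1 (w (3*m+5) \<noteq> -w (3*m+3)) (w (3*m+6) \<noteq> -w (3*m+3)) (-w (3*m+7) \<noteq> -w (3*m+3)) then 1 else 0)"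
    "fl (m+3) w (1,m+3) = (if ex1 (-w (3*m+5) \<noteq> w (3*m+3)) (-w (3*m+6) \<noteq> w (3*m+3)) (w (3*m+7) \<noteq> w (3*m+3)) then 1 else 0)"
    "fl (m+3) w (2,m+3) = (if ex1 (w (3*m+5) \<noteq> w (3*m+3)) (-w (3*m+6) \<noteq> w (3*m+3)) (-w (3*m+7) \<noteq> w (3*m+3)) then 1 else 0)"
    "fl (m+2) mu (1,m+2) = (if ex1 (-w (3*m+2) \<noteq> w (3*m)) (-w (3*m+3) \<noteq> w (3*m)) (w (3*m+4) \<noteq> w (3*m)) then 1 else 0)"
    "fl (m+2) mu (2,m+2) = (if ex1 (w (3*m+2) \<noteq> w (3*m)) (-w (3*m+3) \<noteq> w (3*m)) (-w (3*m+4) \<noteq> w (3*m)) then 1 else 0)"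
    unfolding flw vx_m1 vx_m2 face_flip_def borders_m mw by simp_all
  have F: "fl (m+3) w (1,m+2) + fl (m+3) w (2,m+2) + fl (m+3) w (1,m+3) + fl (m+3) w (2,m+3)
     - fl (m+2) mu (1,m+2) - fl (m+2) mu (2,m+2) = ?R"
    unfolding A
    by (rule core[OF vals[of "3*m"] vals[of "3*m+2"] vals[of "3*m+3"] vals[of "3*m+4"] vals[of "3*m+5"] vals[of "3*m+6"] vals[of "3*m+7"] v1' v2']) auto
  show ?thesis using D F by simp
qed

lemma core1:
  fixes s x y z :: int
  assumes "s = 1 \<or> s = -1" "x = 1 \<or> x = -1" "y = 1 \<or> y = -1" "z = 1 \<or> z = -1"
    "ex1 (x \<noteq> s) (y \<noteq> s) (z \<noteq> s)"
  shows "(if ex1 (-x \<noteq> -s) (y \<noteq> -s) (z \<noteq> -s) then (1::int) else 0)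
       + (if ex1 (x \<noteq> -s) (y \<noteq> -s) (-z \<noteq> -s) then (1::int) else 0)
       + (if ex1 (-x \<noteq> s) (-y \<noteq> s) (z \<noteq> s) then (1::int) else 0)
       + (if ex1 (x \<noteq> s) (-y \<noteq> s) (-z \<noteq> s) then (1::int) else 0)
       - 1 - 1
     = (if x \<noteq> s then 0 else if y \<noteq> s then 2 else 0)"
proof -
  have e: "\<And>u v::int. (u = 1 \<or> u = -1) \<Longrightarrow> (v = 1 \<or> v = -1) \<Longrightarrow> (-u \<noteq> v) = (u = v)" by auto
  have e2: "\<And>u v::int. (u = 1 \<or> u = -1) \<Longrightarrow> (v = 1 \<or> v = -1) \<Longrightarrow> (u \<noteq> -v) = (u = v)" by auto
  note E = e[OF assms(2) assms(1)] e[OF assms(3) assms(1)] e[OF assms(4) assms(1)]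
    e2[OF assms(2) assms(1)] e2[OF assms(3) assms(1)] e2[OF assms(4) assms(1)]
  show ?thesis using assms(5) unfolding E neg_equal_iff_equal
    apply (cases "x = s"; cases "y = s"; cases "z = s")
    apply (simp_all add: ex1_def)
    done
qed

lemma delta_1:
  assumes lv: "locally_valid 1 mu" and ext: "w \<in> extensions 1 mu"
  shows "int (nflip 2 w) - int (nflip 1 mu) = (if w 2 \<noteq> w 0 then 0 else if w 3 \<noteq> w 0 then 2 else 0)"
proof -
  have lw: "locally_valid 2 w" using ext_props(1)[OF ext] by (simp add: numeral_eq_Suc)
  have D: "int (nflip 2 w) - int (nflip 1 mu) =
     fl 2 w (1,1) + fl 2 w (2,1) + fl 2 w (1,2) + fl 2 w (2,2) - fl 1 mu (1,1) - fl 1 mu (2,1)"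
    using delta[of 1 mu w] lv ext by (simp add: numeral_eq_Suc)
  have c2: "{0, 2, 3, 4} \<subseteq> creases 2"
    using vertex_in_creases[of 1 2] by simp
  have mvw: "mv_assign 2 w" using lw lv_iff by auto
  have vals: "w e = 1 \<or> w e = -1" if "e \<in> {0, 2, 3, 4}" for e
    using pm_val[OF mvw, of e] that c2 by auto
  have v2: "vx w 1" using lw lv_iff by auto
  have v2': "ex1 (w 2 \<noteq> w 0) (w 3 \<noteq> w 0) (w 4 \<noteq> w 0)" using v2 unfolding vx_1 .
  have flw: "\<And>i. fl 2 w (i,1) = (if vx (face_flip 2 w (i,1)) 1 then 1 else 0)"
    "\<And>i. fl 2 w (i,2) = (if vx (face_flip 2 w (i,2)) 1 then 1 else 0)"
    "\<And>i. fl 1 mu (i,1) = 1"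
    unfolding fl_def
    using flip_local[OF lw, of 1] flip_local[OF lw, of 2] flip_local[OF lv, of 1] by simp_all
  have A: "fl 2 w (1,1) = (if ex1 (-w 2 \<noteq> -w 0) (w 3 \<noteq> -w 0) (w 4 \<noteq> -w 0) then 1 else 0)"
    "fl 2 w (2,1) = (if ex1 (w 2 \<noteq> -w 0) (w 3 \<noteq> -w 0) (-w 4 \<noteq> -w 0) then 1 else 0)"
    "fl 2 w (1,2) = (if ex1 (-w 2 \<noteq> w 0) (-w 3 \<noteq> w 0) (w 4 \<noteq> w 0) then 1 else 0)"
    "fl 2 w (2,2) = (if ex1 (w 2 \<noteq> w 0) (-w 3 \<noteq> w 0) (-w 4 \<noteq> w 0) then 1 else 0)"
    unfolding flw vx_1 face_flip_def borders_1 by simp_all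
  show ?thesis unfolding D A flw(3)
    by (rule core1[OF vals[of 0] vals[of 2] vals[of 3] vals[of 4] v2']) auto
qed

definition tp :: "nat \<Rightarrow> (nat \<Rightarrow> int) \<Rightarrow> nat" where
  "tp n w = (if w (3*n-1) \<noteq> w (3*n-3) then 1 else if w (3*n) \<noteq> w (3*n-3) then 2 else 3)"

lemma trip:
  fixes s x y z x' y' z' :: int
  assumes "s = 1 \<or> s = -1" "x = 1 \<or> x = -1" "y = 1 \<or> y = -1" "z = 1 \<or> z = -1"
    "x' = 1 \<or> x' = -1" "y' = 1 \<or> y' = -1" "z' = 1 \<or> z' = -1"
    "ex1 (x \<noteq> s) (y \<noteq> s) (z \<noteq> s)" "ex1 (x' \<noteq> s) (y' \<noteq> s) (z' \<noteq> s)"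
    "(if x \<noteq> s then 1 else if y \<noteq> s then 2 else (3::nat)) = (if x' \<noteq> s then 1 else if y' \<noteq> s then 2 else 3)"
  shows "x = x' \<and> y = y' \<and> z = z'"
proof -
  have o: "\<And>u v::int. (u = 1 \<or> u = -1) \<Longrightarrow> (v = 1 \<or> v = -1) \<Longrightarrow> u \<noteq> s \<Longrightarrow> v \<noteq> s \<Longrightarrow> u = v"
    using assms(1) by auto
  show ?thesis using assms(8-10) o[OF assms(2,5)] o[OF assms(3,6)] o[OF assms(4,7)]
    apply (cases "x = s"; cases "y = s"; cases "z = s"; cases "x' = s"; cases "y' = s"; cases "z' = s")
    apply (simp_all add: ex1_def)
    done
qed

lemma right_in_creases: "n \<ge> 1 \<Longrightarrow> 3*n-3 \<in> creases n"
proof (cases "n = 1")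
  case True then show ?thesis unfolding creases_def by simp
next
  case False
  assume "n \<ge> 1"
  then have "n - 1 \<in> {1..n-1}" "3*(n-1) = 3*n-3" using False by auto
  then show ?thesis using vertex_in_creases[of "n-1" n] by auto
qed

lemma ext_inj:
  assumes n: "n \<ge> 1" and e1: "w \<in> extensions n mu" and e2: "w' \<in> extensions n mu"
    and t: "tp n w = tp n w'"
  shows "w = w'"
proof -
  have lw: "locally_valid (n+1) w" and ag: "\<And>e. e \<in> creases n \<Longrightarrow> w e = mu e"
    using ext_props[OF e1] by auto
  have lw': "locally_valid (n+1) w'" and ag': "\<And>e. e \<in> creases n \<Longrightarrow> w' e = mu e"
    using ext_props[OF e2] by auto
  have mv: "mv_assign (n+1) w" "mv_assign (n+1) w'" using lw lw' lv_iff by auto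
  have kn: "n \<in> {1..n+1-1}" using n by auto
  have vc: "{3*n-3, 3*n-1, 3*n, 3*n+1} \<subseteq> creases (n+1)" using vertex_in_creases[OF kn] .
  have ss: "w' (3*n-3) = w (3*n-3)" using ag ag' right_in_creases[OF n] by auto
  have vw: "ex1 (w (3*n-1) \<noteq> w (3*n-3)) (w (3*n) \<noteq> w (3*n-3)) (w (3*n+1) \<noteq> w (3*n-3))"
  proof -
    have "vx w n" using lw kn unfolding lv_iff by blast
    then show ?thesis unfolding vx_at[OF n refl refl refl refl] .
  qed
  have vw': "ex1 (w' (3*n-1) \<noteq> w (3*n-3)) (w' (3*n) \<noteq> w (3*n-3)) (w' (3*n+1) \<noteq> w (3*n-3))"
  proof -
    have "vx w' n" using lw' kn unfolding lv_iff by blast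
    then show ?thesis unfolding vx_at[OF n refl refl refl refl] ss .
  qed
  have pm: "\<And>e. e \<in> {3*n-3, 3*n-1, 3*n, 3*n+1} \<Longrightarrow> w e = 1 \<or> w e = -1"
    "\<And>e. e \<in> {3*n-3, 3*n-1, 3*n, 3*n+1} \<Longrightarrow> w' e = 1 \<or> w' e = -1"
    using pm_val[OF mv(1)] pm_val[OF mv(2)] vc by auto
  have tt: "(if w (3*n-1) \<noteq> w (3*n-3) then 1 else if w (3*n) \<noteq> w (3*n-3) then 2 else (3::nat)) =
    (if w' (3*n-1) \<noteq> w (3*n-3) then 1 else if w' (3*n) \<noteq> w (3*n-3) then 2 else 3)"
    using t unfolding tp_def ss .
  have tr: "w (3*n-1) = w' (3*n-1) \<and> w (3*n) = w' (3*n) \<and> w (3*n+1) = w' (3*n+1)"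
    by (rule trip[OF pm(1) pm(1) pm(1) pm(1) pm(2) pm(2) pm(2) vw vw' tt]) auto
  have cs: "creases (n+1) = creases n \<union> {3*n-1, 3*n, 3*n+1}" using creases_Suc[OF n] .
  show ?thesis
  proof
    fix e
    show "w e = w' e"
    proof (cases "e \<in> creases (n+1)")
      case True then show ?thesis using cs ag ag' tr by auto
    next
      case False then show ?thesis using mv unfolding mv_assign_def by auto
    qed
  qed
qed

lemma final:
  fixes D1 D2 D3 X1 X3 :: int and t1 t2 t3 :: nat
  assumes "t1 \<in> {1,2,3}" "t2 \<in> {1,2,3}" "t3 \<in> {1,2,3}" "t1 \<noteq> t2" "t1 \<noteq> t3" "t2 \<noteq> t3"
    "D1 = (if t1 = 1 then X1 else if t1 = 2 then 2 else X3)"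
    "D2 = (if t2 = 1 then X1 else if t2 = 2 then 2 else X3)"
    "D3 = (if t3 = 1 then X1 else if t3 = 2 then 2 else X3)"
    "X1 = 0 \<or> X1 = 1" "X3 = 0 \<or> X3 = 1" "\<not> (X1 = 1 \<and> X3 = 1)" "D1 \<ge> D2" "D2 \<ge> D3"
  shows "(D1, D2, D3) = (if X1 = 0 \<and> X3 = 0 then (2,0,0) else (2,1,0))"
  using assms by auto

lemma tp_range: "tp n w \<in> {1,2,3}" unfolding tp_def by auto

lemma delta_m':
  assumes lv: "locally_valid (m+2) mu" and ext: "w \<in> extensions (m+2) mu"
  shows "int (nflip (m+2+1) w) - int (nflip (m+2) mu) =
    (if tp (m+2) w = 1 then (if mu (3*m+2) = mu (3*m+3) \<and> mu (3*m+4) \<noteq> mu (3*m+3) then 1 else 0)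
     else if tp (m+2) w = 2 then 2
     else (if mu (3*m+4) = mu (3*m+3) \<and> mu (3*m+2) \<noteq> mu (3*m+3) then 1 else 0))"
proof -
  have agree: "\<And>e. e \<in> creases (m+2) \<Longrightarrow> w e = mu e"
    using ext_props[OF ext] by auto
  have c1: "{3*m, 3*m+2, 3*m+3, 3*m+4} \<subseteq> creases (m+2)"
    using vertex_in_creases[of "m+1" "m+2"] by (simp add: numeral_eq_Suc)
  have mw: "w (3*m+2) = mu (3*m+2)" "w (3*m+3) = mu (3*m+3)" "w (3*m+4) = mu (3*m+4)"
    using agree c1 by auto
  have t: "tp (m+2) w = (if w (3*m+5) \<noteq> w (3*m+3) then 1 else if w (3*m+6) \<noteq> w (3*m+3) then 2 else 3)"
  proof -
    have eqs: "3*(m+2) = 3*m+6" "3*m+6-1 = 3*m+5" "3*m+6-3 = 3*m+3" by simp_all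
    show ?thesis unfolding tp_def by (simp only: eqs)
  qed
  have e: "m + 2 + 1 = m + 3" by simp
  show ?thesis unfolding e delta_m[OF lv ext] t mw by simp
qed

lemma cond_lemma:
  fixes a b s d :: int
  assumes "a = 1 \<or> a = -1" "b = 1 \<or> b = -1" "s = 1 \<or> s = -1" "d = 1 \<or> d = -1"
    "ex1 (b \<noteq> a) (s \<noteq> a) (d \<noteq> a)"
  shows "((b, s, d) = (1, -1, 1) \<or> (b, s, d) = (-1, 1, -1)) \<longleftrightarrow>
    ((if b = s \<and> d \<noteq> s then 1 else 0) = (0::int) \<and> (if d = s \<and> b \<noteq> s then 1 else 0) = (0::int))"
  using assms by (elim disjE; simp add: ex1_def)

theorem theorem4p2:
  fixes n :: nat and mu w1 w2 w3 :: "nat \<Rightarrow> int"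
  assumes "n \<ge> 1"
    and "locally_valid n mu"
    and "extensions n mu = {w1, w2, w3}"
    and "w1 \<noteq> w2" and "w1 \<noteq> w3" and "w2 \<noteq> w3"
    and "nflip (n+1) w1 \<ge> nflip (n+1) w2" and "nflip (n+1) w2 \<ge> nflip (n+1) w3"
  shows "(int (nflip (n+1) w1) - int (nflip n mu), int (nflip (n+1) w2) - int (nflip n mu),
           int (nflip (n+1) w3) - int (nflip n mu)) =
         (if n = 1 \<or> (n \<ge> 2 \<and> ((mu (3*n-4), mu (3*n-3), mu (3*n-2)) = (1, -1, 1) \<or>
                                  (mu (3*n-4), mu (3*n-3), mu (3*n-2)) = (-1, 1, -1)))
          then (2, 0, 0) else (2, 1, 0))"
proof -
  have ws: "w1 \<in> extensions n mu" "w2 \<in> extensions n mu" "w3 \<in> extensions n mu"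
    using assms(3) by auto
  have td: "tp n w1 \<noteq> tp n w2" "tp n w1 \<noteq> tp n w3" "tp n w2 \<noteq> tp n w3"
    using ext_inj[OF assms(1) ws(1) ws(2)] ext_inj[OF assms(1) ws(1) ws(3)] ext_inj[OF assms(1) ws(2) ws(3)]
      assms(4-6) by auto
  have ord: "int (nflip (n+1) w1) - int (nflip n mu) \<ge> int (nflip (n+1) w2) - int (nflip n mu)"
    "int (nflip (n+1) w2) - int (nflip n mu) \<ge> int (nflip (n+1) w3) - int (nflip n mu)"
    using assms(7,8) by auto
  show ?thesis
  proof (cases "n = 1")
    case True
    have D: "int (nflip (n+1) w) - int (nflip n mu) = (if tp n w = 1 then 0 else if tp n w = 2 then 2 else 0)"
      if "w \<in> extensions n mu" for w
      using delta_1[of mu w] that assms(2) unfolding True one_add_one by (simp add: tp_def)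
    have "(int (nflip (n+1) w1) - int (nflip n mu), int (nflip (n+1) w2) - int (nflip n mu),
           int (nflip (n+1) w3) - int (nflip n mu)) = (if (0::int) = 0 \<and> (0::int) = 0 then (2,0,0) else (2,1,0))"
      by (rule final[OF tp_range tp_range tp_range td D[OF ws(1)] D[OF ws(2)] D[OF ws(3)] _ _ _ ord]) auto
    then show ?thesis using True by simp
  next
    case False
    have "\<exists>m. n = m + 2" using False assms(1) by (intro exI[of _ "n - 2"]) simp
    then obtain m where m: "n = m + 2" by blast
    define X1 :: int where "X1 = (if mu (3*m+2) = mu (3*m+3) \<and> mu (3*m+4) \<noteq> mu (3*m+3) then 1 else 0)"
    define X3 :: int where "X3 = (if mu (3*m+4) = mu (3*m+3) \<and> mu (3*m+2) \<noteq> mu (3*m+3) then 1 else 0)"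
    have lv: "locally_valid (m+2) mu" using assms(2) m by simp
    have D: "int (nflip (n+1) w) - int (nflip n mu) = (if tp n w = 1 then X1 else if tp n w = 2 then 2 else X3)"
      if "w \<in> extensions n mu" for w
      using delta_m'[OF lv, of w] that m unfolding X1_def X3_def by simp
    have R: "(int (nflip (n+1) w1) - int (nflip n mu), int (nflip (n+1) w2) - int (nflip n mu),
           int (nflip (n+1) w3) - int (nflip n mu)) = (if X1 = 0 \<and> X3 = 0 then (2,0,0) else (2,1,0))"
      by (rule final[OF tp_range tp_range tp_range td D[OF ws(1)] D[OF ws(2)] D[OF ws(3)] _ _ _ ord])
        (auto simp: X1_def X3_def)
    have c1: "{3*m, 3*m+2, 3*m+3, 3*m+4} \<subseteq> creases (m+2)"
      using vertex_in_creases[of "m+1" "m+2"] by (simp add: numeral_eq_Suc)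
    have mv: "mv_assign (m+2) mu" using lv lv_iff by auto
    have vals: "mu e = 1 \<or> mu e = -1" if "e \<in> {3*m, 3*m+2, 3*m+3, 3*m+4}" for e
      using pm_val[OF mv, of e] that c1 by auto
    have v1: "vx mu (m+1)" using lv lv_iff by (auto simp: numeral_eq_Suc)
    have v1': "ex1 (mu (3*m+2) \<noteq> mu (3*m)) (mu (3*m+3) \<noteq> mu (3*m)) (mu (3*m+4) \<noteq> mu (3*m))"
      using v1 unfolding vx_m1 .
    have C: "((mu (3*m+2), mu (3*m+3), mu (3*m+4)) = (1, -1, 1) \<or> (mu (3*m+2), mu (3*m+3), mu (3*m+4)) = (-1, 1, -1))
      \<longleftrightarrow> (X1 = 0 \<and> X3 = 0)"
      unfolding X1_def X3_def
      by (rule cond_lemma[OF vals[of "3*m"] vals[of "3*m+2"] vals[of "3*m+3"] vals[of "3*m+4"] v1']) auto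
    have idx: "3*n-4 = 3*m+2" "3*n-3 = 3*m+3" "3*n-2 = 3*m+4" using m by auto
    show ?thesis unfolding R idx using C False m by auto
  qed
qed

end
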